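(* Suppose that $d>1$, $1<p\le\infty$ and $p\le q\le pd$. Then the operator $$R_2f_0(r)=\chi_{[0,4/3)}(r)\sup_{t\in[1,2],\ t\ge3r/2}\frac1r\int_{t-r}^{t+r}|f_0(s)|\,ds$$ is bounded from $L^p(\mu_d)$ to $L^q(\mu_d)$. Moreover, $R_2$ is of strong type $(1,1)$ and weak type $(1,d)$ with respect to the measure $\mu_d$.
   Context: $\mu_d$ is the measure on $\mathbb{R}^+$ with $d\mu_d=r^{d-1}dr$. *)

theory Defs
  imports "HOL-Analysis.Analysis"
begin

definition mu :: "real \<Rightarrow> real measure" where
  "mu d = density (restrict_space lborel {0<..}) (\<lambda>r. ennreal (r powr (d - 1)))"

text \<open>Real powers of extended nonnegative reals (used with positive exponents only).\<close>
definition enn_powr :: "ennreal \<Rightarrow> real \<Rightarrow> ennreal" where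
  "enn_powr x a = (if x = \<infinity> then \<infinity> else ennreal (enn2real x powr a))"

definition Lp_norm :: "'a measure \<Rightarrow> ennreal \<Rightarrow> ('a \<Rightarrow> ennreal) \<Rightarrow> ennreal" where
  "Lp_norm M p g =
     (if p = \<infinity> then Inf {C. AE x in M. g x \<le> C}
      else enn_powr (\<integral>\<^sup>+ x. enn_powr (g x) (enn2real p) \<partial>M) (1 / enn2real p))"

definition R2 :: "(real \<Rightarrow> real) \<Rightarrow> real \<Rightarrow> ennreal" where
  "R2 f0 r = indicator {0..<4/3} r *
     (SUP t\<in>{t. 1 \<le> t \<and> t \<le> 2 \<and> 3 * r / 2 \<le> t}.
        ennreal (1 / r) * (\<integral>\<^sup>+ s\<in>{t - r..t + r}. ennreal \<bar>f0 s\<bar> \<partial>lborel))"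

end

theory Submission
  imports Defs
begin
lemma mu_nn_integral:
  fixes h :: "real \<Rightarrow> ennreal"
  assumes [measurable]: "h \<in> borel_measurable borel"
  shows "(\<integral>\<^sup>+ x. h x \<partial>mu d) = (\<integral>\<^sup>+ x. ennreal (x powr (d - 1)) * h x * indicator {0<..} x \<partial>lborel)"
  unfolding mu_def
  apply (subst nn_integral_density)
  apply (auto intro!: measurable_restrict_space1 simp: nn_integral_restrict_space)
  done

lemma space_mu [simp]: "space (mu d) = {0<..}"
  unfolding mu_def by simp

lemma measurable_mu: "h \<in> borel_measurable borel \<Longrightarrow> h \<in> borel_measurable (mu d)"
  unfolding mu_def by (simp add: measurable_restrict_space1)

lemma sets_mu: "A \<in> sets borel \<Longrightarrow> A \<subseteq> {0<..} \<Longrightarrow> A \<in> sets (mu d)"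
  unfolding mu_def by (simp add: sets_restrict_space_iff)

lemma mu_Ioo_int:
  assumes "0 \<le> a" "0 < d"
  shows "(\<integral>\<^sup>+ x. indicator {0<..<a} x \<partial>mu d) \<le> ennreal (a powr d / d)"
proof -
  have "(\<integral>\<^sup>+ x. indicator {0<..<a} x \<partial>mu d) = (\<integral>\<^sup>+ x. ennreal (x powr (d - 1)) * indicator {0<..<a} x * indicator {0<..} x \<partial>lborel)"
    by (rule mu_nn_integral) simp
  also have "\<dots> \<le> (\<integral>\<^sup>+ x. ennreal (x powr (d - 1)) * indicator {0..a} x \<partial>lborel)"
    by (intro nn_integral_mono) (auto split: split_indicator)
  also have "\<dots> = ennreal (a powr (d - 1 + 1) / (d - 1 + 1))"
    by (intro nn_integral_has_integral_lebesgue' has_integral_powr_from_0) (use assms in auto)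
  finally show ?thesis by simp
qed

lemma mu_Ioo:
  assumes "0 \<le> a" "0 < d"
  shows "emeasure (mu d) {0<..<a} \<le> ennreal (a powr d / d)"
  using mu_Ioo_int[OF assms] by (subst (asm) nn_integral_indicator) (auto intro: sets_mu)

lemma R2_out: "r \<le> 0 \<or> 4/3 \<le> r \<Longrightarrow> R2 f r = 0"
  unfolding R2_def by (auto simp: indicator_def intro!: antisym SUP_least)

lemma R2_bound:
  fixes f :: "real \<Rightarrow> real" and r lam :: real
  assumes [measurable]: "f \<in> borel_measurable borel" and r: "0 < r" "r < 4/3" and lam: "0 \<le> lam"
  shows "R2 f r \<le> ennreal (2 * lam) + ennreal (1 / r) *
     (\<integral>\<^sup>+ s. ennreal \<bar>f s\<bar> * indicator {s. lam < \<bar>f s\<bar>} s * indicator {1/3..10/3} s \<partial>lborel)"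
    (is "_ \<le> _ + _ * ?G")
proof -
  have "(SUP t\<in>{t. 1 \<le> t \<and> t \<le> 2 \<and> 3 * r / 2 \<le> t}.
        ennreal (1 / r) * (\<integral>\<^sup>+ s\<in>{t - r..t + r}. ennreal \<bar>f s\<bar> \<partial>lborel))
      \<le> ennreal (2 * lam) + ennreal (1 / r) * ?G"
  proof (rule SUP_least)
    fix t assume t: "t \<in> {t. 1 \<le> t \<and> t \<le> 2 \<and> 3 * r / 2 \<le> t}"
    have "(\<integral>\<^sup>+ s\<in>{t - r..t + r}. ennreal \<bar>f s\<bar> \<partial>lborel) \<le>
       (\<integral>\<^sup>+ s. ennreal lam * indicator {t - r..t + r} s +
          ennreal \<bar>f s\<bar> * indicator {s. lam < \<bar>f s\<bar>} s * indicator {1/3..10/3} s \<partial>lborel)"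
    proof (intro nn_integral_mono)
      fix s
      show "ennreal \<bar>f s\<bar> * indicator {t - r..t + r} s \<le> ennreal lam * indicator {t - r..t + r} s +
          ennreal \<bar>f s\<bar> * indicator {s. lam < \<bar>f s\<bar>} s * indicator {1/3..10/3} s"
        using t r by (auto split: split_indicator intro: ennreal_leI)
    qed
    also have "\<dots> = ennreal lam * emeasure lborel {t - r..t + r} + ?G"
      by (subst nn_integral_add) (auto simp: nn_integral_cmult_indicator)
    also have "\<dots> = ennreal (2 * r * lam) + ?G"
      using r lam by (simp add: ennreal_mult' mult_ac)
    finally have "ennreal (1 / r) * (\<integral>\<^sup>+ s\<in>{t - r..t + r}. ennreal \<bar>f s\<bar> \<partial>lborel) \<le>
       ennreal (1 / r) * (ennreal (2 * r * lam) + ?G)"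
      by (rule mult_left_mono) simp
    also have "\<dots> = ennreal (2 * lam) + ennreal (1 / r) * ?G"
      using r lam by (simp add: distrib_left ennreal_mult'[symmetric])
    finally show "ennreal (1 / r) * (\<integral>\<^sup>+ s\<in>{t - r..t + r}. ennreal \<bar>f s\<bar> \<partial>lborel)
      \<le> ennreal (2 * lam) + ennreal (1 / r) * ?G" .
  qed
  then show ?thesis
    unfolding R2_def using r by simp
qed


lemma enn_powr_ennreal: "0 \<le> x \<Longrightarrow> enn_powr (ennreal x) a = ennreal (x powr a)"
  unfolding enn_powr_def by simp

lemma enn_powr_1 [simp]: "enn_powr x 1 = x"
  unfolding enn_powr_def by (cases x) auto

lemma enn_powr_top [simp]: "enn_powr top a = top"
  unfolding enn_powr_def by simp

lemma enn_powr_mono: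
  assumes "x \<le> y" "0 \<le> a"
  shows "enn_powr x a \<le> enn_powr y a"
proof (cases "y = top")
  case True then show ?thesis by simp
next
  case False
  then obtain yr where y: "y = ennreal yr" "0 \<le> yr" by (cases y) auto
  with assms obtain xr where x: "x = ennreal xr" "0 \<le> xr" "xr \<le> yr"
    by (cases x) (auto simp: top_unique)
  show ?thesis using x y assms by (simp add: enn_powr_ennreal powr_mono2)
qed

lemma enn_powr_less_top: "enn_powr x a < top \<Longrightarrow> x < top"
  unfolding enn_powr_def by (auto split: if_splits simp: top.not_eq_extremum)

lemma Lp_norm_1: "Lp_norm M 1 g = (\<integral>\<^sup>+ x. g x \<partial>M)"
  unfolding Lp_norm_def by simp

lemma Lp_norm_fin:
  assumes "p \<noteq> top"
  shows "Lp_norm M p (\<lambda>x. ennreal \<bar>f x\<bar>) =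
    enn_powr (\<integral>\<^sup>+ x. ennreal (\<bar>f x\<bar> powr enn2real p) \<partial>M) (1 / enn2real p)"
  unfolding Lp_norm_def using assms by (simp add: enn_powr_ennreal)

lemma J_bound:
  fixes h :: "real \<Rightarrow> ennreal"
  assumes [measurable]: "h \<in> borel_measurable borel" and d: "1 \<le> d"
  shows "(\<integral>\<^sup>+ s. h s * indicator {1/3..10/3} s \<partial>lborel) \<le> ennreal (3 powr (d - 1)) * (\<integral>\<^sup>+ s. h s \<partial>mu d)"
proof -
  have "(\<integral>\<^sup>+ s. h s * indicator {1/3..10/3} s \<partial>lborel) \<le>
     (\<integral>\<^sup>+ s. ennreal (3 powr (d - 1)) * (ennreal (s powr (d - 1)) * h s * indicator {0<..} s) \<partial>lborel)"
  proof (intro nn_integral_mono)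
    fix s :: real
    show "h s * indicator {1/3..10/3} s \<le> ennreal (3 powr (d - 1)) * (ennreal (s powr (d - 1)) * h s * indicator {0<..} s)"
    proof (cases "s \<in> {1/3..10/3}")
      case True
      then have s: "1/3 \<le> s" by auto
      have "(1/3) powr (d - 1) \<le> s powr (d - 1)" using s d by (intro powr_mono2) auto
      then have "3 powr (d - 1) * (1/3) powr (d - 1) \<le> 3 powr (d - 1) * s powr (d - 1)"
        by (intro mult_left_mono) auto
      moreover have "3 powr (d - 1) * (1/3) powr (d - 1) = 1"
        by (simp add: powr_divide)
      ultimately have "1 \<le> ennreal (3 powr (d - 1)) * ennreal (s powr (d - 1))"
        by (simp add: ennreal_mult'[symmetric])
      then have "1 * h s \<le> ennreal (3 powr (d - 1)) * ennreal (s powr (d - 1)) * h s"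
        by (intro mult_right_mono) auto
      then show ?thesis using True s by (simp add: mult_ac)
    qed simp
  qed
  also have "\<dots> = ennreal (3 powr (d - 1)) * (\<integral>\<^sup>+ s. h s \<partial>mu d)"
    by (subst nn_integral_cmult) (auto simp: mu_nn_integral)
  finally show ?thesis .
qed

definition Gf :: "(real \<Rightarrow> real) \<Rightarrow> real \<Rightarrow> ennreal" where
  "Gf f lam = (\<integral>\<^sup>+ s. ennreal \<bar>f s\<bar> * indicator {s. lam < \<bar>f s\<bar>} s * indicator {1/3..10/3} s \<partial>lborel)"

lemma Gf_cheb:
  fixes f :: "real \<Rightarrow> real"
  assumes [measurable]: "f \<in> borel_measurable borel" and lam: "0 < lam" and P: "1 \<le> P"
  shows "Gf f lam \<le> ennreal (lam powr (1 - P)) * (\<integral>\<^sup>+ s. ennreal (\<bar>f s\<bar> powr P) * indicator {1/3..10/3} s \<partial>lborel)"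
proof -
  have "Gf f lam \<le> (\<integral>\<^sup>+ s. ennreal (lam powr (1 - P)) * (ennreal (\<bar>f s\<bar> powr P) * indicator {1/3..10/3} s) \<partial>lborel)"
    unfolding Gf_def
  proof (intro nn_integral_mono)
    fix s
    show "ennreal \<bar>f s\<bar> * indicator {s. lam < \<bar>f s\<bar>} s * indicator {1/3..10/3} s
       \<le> ennreal (lam powr (1 - P)) * (ennreal (\<bar>f s\<bar> powr P) * indicator {1/3..10/3} s)"
    proof (cases "lam < \<bar>f s\<bar>")
      case True
      have "\<bar>f s\<bar> = \<bar>f s\<bar> powr P * \<bar>f s\<bar> powr (1 - P)"
        using True lam by (simp add: powr_add[symmetric])
      also have "\<dots> \<le> \<bar>f s\<bar> powr P * lam powr (1 - P)"
        using True lam P by (intro mult_left_mono powr_mono2') auto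
      finally have "ennreal \<bar>f s\<bar> \<le> ennreal (lam powr (1 - P)) * ennreal (\<bar>f s\<bar> powr P)"
        by (simp add: ennreal_mult'[symmetric] mult_ac ennreal_leI)
      then show ?thesis using True by (auto split: split_indicator)
    qed simp
  qed
  also have "\<dots> = ennreal (lam powr (1 - P)) * (\<integral>\<^sup>+ s. ennreal (\<bar>f s\<bar> powr P) * indicator {1/3..10/3} s \<partial>lborel)"
    by (rule nn_integral_cmult) auto
  finally show ?thesis .
qed


lemma R2_bound0:
  assumes [measurable]: "f \<in> borel_measurable borel"
  shows "R2 f r \<le> indicator {0<..<4/3} r * (ennreal (1 / r) * Gf f 0)"
proof (cases "0 < r \<and> r < 4/3")
  case True
  then show ?thesis using R2_bound[OF assms, of r 0] by (simp add: Gf_def)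
next
  case False
  then show ?thesis by (subst R2_out) auto
qed

lemma L1_strong:
  assumes [measurable]: "f \<in> borel_measurable borel" and d: "1 < d"
  shows "(\<integral>\<^sup>+ r. R2 f r \<partial>mu d) \<le> ennreal (3 powr (d - 1) * ((4/3) powr (d - 1) / (d - 1))) * (\<integral>\<^sup>+ s. ennreal \<bar>f s\<bar> \<partial>mu d)"
proof -
  have "(\<integral>\<^sup>+ r. R2 f r \<partial>mu d) \<le> (\<integral>\<^sup>+ r. Gf f 0 * (ennreal (1 / r) * indicator {0<..<4/3} r) \<partial>mu d)"
    by (intro nn_integral_mono) (use R2_bound0[OF assms(1)] in \<open>auto simp: mult_ac\<close>)
  also have "\<dots> = Gf f 0 * (\<integral>\<^sup>+ r. ennreal (1 / r) * indicator {0<..<4/3} r \<partial>mu d)"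
    by (rule nn_integral_cmult) (rule measurable_mu, simp)
  also have "(\<integral>\<^sup>+ r. ennreal (1 / r) * indicator {0<..<4/3} r \<partial>mu d) \<le> ennreal ((4/3) powr (d - 1) / (d - 1))"
  proof -
    have "(\<integral>\<^sup>+ r. ennreal (1 / r) * indicator {0<..<4/3} r \<partial>mu d) =
      (\<integral>\<^sup>+ r. ennreal (r powr (d - 1)) * (ennreal (1 / r) * indicator {0<..<4/3} r) * indicator {0<..} r \<partial>lborel)"
      by (rule mu_nn_integral) auto
    also have "\<dots> \<le> (\<integral>\<^sup>+ r. ennreal (r powr (d - 2)) * indicator {0..4/3} r \<partial>lborel)"
    proof (intro nn_integral_mono)
      fix r :: real
      show "ennreal (r powr (d - 1)) * (ennreal (1 / r) * indicator {0<..<4/3} r) * indicator {0<..} r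
         \<le> ennreal (r powr (d - 2)) * indicator {0..4/3} r"
      proof (cases "0 < r \<and> r < 4/3")
        case True
        then have "r powr (d - 1) * (1 / r) = r powr (d - 2)"
          by (simp add: powr_diff[of r "d - 1" 1, simplified] field_simps)
        then show ?thesis using True by (simp add: ennreal_mult'[symmetric])
      qed (auto split: split_indicator)
    qed
    also have "\<dots> = ennreal ((4/3) powr (d - 2 + 1) / (d - 2 + 1))"
      by (intro nn_integral_has_integral_lebesgue' has_integral_powr_from_0) (use d in auto)
    finally show ?thesis by (simp add: algebra_simps)
  qed
  then have "Gf f 0 * (\<integral>\<^sup>+ r. ennreal (1 / r) * indicator {0<..<4/3} r \<partial>mu d) \<le> Gf f 0 * ennreal ((4/3) powr (d - 1) / (d - 1))"
    by (rule mult_left_mono) simp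
  also have "Gf f 0 * ennreal ((4/3) powr (d - 1) / (d - 1)) \<le> ennreal (3 powr (d - 1)) * (\<integral>\<^sup>+ s. ennreal \<bar>f s\<bar> \<partial>mu d) * ennreal ((4/3) powr (d - 1) / (d - 1))"
  proof (rule mult_right_mono)
    have "Gf f 0 \<le> (\<integral>\<^sup>+ s. ennreal \<bar>f s\<bar> * indicator {1/3..10/3} s \<partial>lborel)"
      unfolding Gf_def by (intro nn_integral_mono) (auto split: split_indicator)
    also have "\<dots> \<le> ennreal (3 powr (d - 1)) * (\<integral>\<^sup>+ s. ennreal \<bar>f s\<bar> \<partial>mu d)"
      by (rule J_bound) (use d in auto)
    finally show "Gf f 0 \<le> ennreal (3 powr (d - 1)) * (\<integral>\<^sup>+ s. ennreal \<bar>f s\<bar> \<partial>mu d)" .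
  qed simp
  finally have "(\<integral>\<^sup>+ r. R2 f r \<partial>mu d) \<le> ennreal (3 powr (d - 1)) * (\<integral>\<^sup>+ s. ennreal \<bar>f s\<bar> \<partial>mu d) * ennreal ((4/3) powr (d - 1) / (d - 1))" .
  moreover have "ennreal (3 powr (d - 1) * ((4/3) powr (d - 1) / (d - 1))) = ennreal (3 powr (d - 1)) * ennreal ((4/3) powr (d - 1) / (d - 1))"
    by (rule ennreal_mult) (use d in auto)
  ultimately show ?thesis by (simp only: mult_ac)
qed


lemma Gf0_bound:
  assumes [measurable]: "f \<in> borel_measurable borel" and d: "1 < d"
  shows "Gf f 0 \<le> ennreal (3 powr (d - 1)) * (\<integral>\<^sup>+ s. ennreal \<bar>f s\<bar> \<partial>mu d)"
proof -
  have "Gf f 0 \<le> (\<integral>\<^sup>+ s. ennreal \<bar>f s\<bar> * indicator {1/3..10/3} s \<partial>lborel)"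
    unfolding Gf_def by (intro nn_integral_mono) (auto split: split_indicator)
  also have "\<dots> \<le> ennreal (3 powr (d - 1)) * (\<integral>\<^sup>+ s. ennreal \<bar>f s\<bar> \<partial>mu d)"
    by (rule J_bound) (use d in auto)
  finally show ?thesis .
qed

lemma L1_weak:
  assumes [measurable]: "f \<in> borel_measurable borel" and d: "1 < d"
    and fin: "(\<integral>\<^sup>+ s. ennreal \<bar>f s\<bar> \<partial>mu d) < top" and lam: "0 < lam"
  shows "ennreal lam * enn_powr (emeasure (mu d) {r \<in> space (mu d). R2 f r > ennreal lam}) (1 / d)
     \<le> ennreal (3 powr (d - 1)) * (\<integral>\<^sup>+ s. ennreal \<bar>f s\<bar> \<partial>mu d)"
proof -
  have G: "Gf f 0 \<le> ennreal (3 powr (d - 1)) * (\<integral>\<^sup>+ s. ennreal \<bar>f s\<bar> \<partial>mu d)"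
    by (rule Gf0_bound) (use d in auto)
  also have "\<dots> < top" using fin by (simp add: ennreal_mult_less_top)
  finally obtain g0 where g0: "Gf f 0 = ennreal g0" "0 \<le> g0"
    by (cases "Gf f 0") auto
  have sub: "{r \<in> space (mu d). R2 f r > ennreal lam} \<subseteq> {0<..<g0 / lam}"
  proof
    fix r assume r: "r \<in> {r \<in> space (mu d). R2 f r > ennreal lam}"
    then have r0: "0 < r" by simp
    have "ennreal lam < R2 f r" using r by simp
    also have "\<dots> \<le> indicator {0<..<4/3} r * (ennreal (1 / r) * ennreal g0)"
      using R2_bound0[OF assms(1), of r] g0 by simp
    also have "\<dots> \<le> ennreal (g0 / r)"
      using r0 g0 by (auto split: split_indicator simp: ennreal_mult'[symmetric])
    finally have "lam < g0 / r" using g0 r0 lam ennreal_less_iff by (metis divide_nonneg_pos less_le)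
    then have "r < g0 / lam" using r0 lam by (simp add: field_simps)
    then show "r \<in> {0<..<g0 / lam}" using r0 by simp
  qed
  have "emeasure (mu d) {r \<in> space (mu d). R2 f r > ennreal lam} \<le> emeasure (mu d) {0<..<g0 / lam}"
    by (rule emeasure_mono[OF sub]) (auto intro: sets_mu)
  also have "\<dots> \<le> ennreal ((g0 / lam) powr d / d)"
    by (rule mu_Ioo) (use g0 lam d in auto)
  finally have "enn_powr (emeasure (mu d) {r \<in> space (mu d). R2 f r > ennreal lam}) (1 / d)
      \<le> enn_powr (ennreal ((g0 / lam) powr d / d)) (1 / d)"
    by (rule enn_powr_mono) (use d in auto)
  also have "\<dots> = ennreal (((g0 / lam) powr d / d) powr (1 / d))"
    by (rule enn_powr_ennreal) (use d in auto)
  also have "((g0 / lam) powr d / d) powr (1 / d) \<le> ((g0 / lam) powr d) powr (1 / d)"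
  proof (rule powr_mono2)
    have "0 \<le> (g0 / lam) powr d" by simp
    then show "(g0 / lam) powr d / d \<le> (g0 / lam) powr d"
      using d by (simp add: divide_le_eq mult_le_cancel_left1 less_imp_le)
  qed (use d in auto)
  also have "((g0 / lam) powr d) powr (1 / d) = g0 / lam"
    using d g0 lam by (simp add: powr_powr)
  finally have "ennreal lam * enn_powr (emeasure (mu d) {r \<in> space (mu d). R2 f r > ennreal lam}) (1 / d)
      \<le> ennreal lam * ennreal (g0 / lam)"
    by (intro mult_left_mono) (auto simp: ennreal_leI)
  also have "\<dots> = Gf f 0" using lam g0 by (simp add: ennreal_mult'[symmetric])
  finally show ?thesis using G by simp
qed

lemma pow2_powr: "(2 powr a) ^ k = ((2::real) ^ k) powr a"
proof -
  have "(2 powr a) ^ k = (2::real) powr (real k * a)" by (simp add: powr_power)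
  also have "\<dots> = ((2::real) powr real k) powr a" by (simp add: powr_powr)
  also have "(2::real) powr real k = 2 ^ k" by (simp add: powr_realpow)
  finally show ?thesis .
qed

lemma geo_bound:
  fixes x n P :: real
  assumes n: "0 < n" and P: "1 < P" and x: "0 \<le> x"
  shows "(\<Sum>k. if n * 2 ^ k < x then ennreal ((2 powr (P - 1)) ^ k) else 0)
    \<le> ennreal (2 powr (P - 1) / (2 powr (P - 1) - 1) * (x / n) powr (P - 1))"
proof -
  define b where "b = (2::real) powr (P - 1)"
  have b1: "1 < b" unfolding b_def using P by simp
  obtain m where m: "x / n < 2 ^ m" using real_arch_pow[of 2 "x / n"] by auto
  have ex: "\<exists>k. x \<le> n * 2 ^ k" using m n by (intro exI[of _ m]) (simp add: field_simps)
  define m0 where "m0 = (LEAST k. x \<le> n * 2 ^ k)"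
  have m0: "x \<le> n * 2 ^ m0" unfolding m0_def by (rule LeastI_ex[OF ex])
  have lt: "n * 2 ^ k < x" if "k < m0" for k
    using not_less_Least[OF that[unfolded m0_def]] by simp
  have ge: "\<not> n * 2 ^ k < x" if "m0 \<le> k" for k
  proof -
    have "(2::real) ^ m0 \<le> 2 ^ k" using that by (intro power_increasing) auto
    then have "n * 2 ^ m0 \<le> n * 2 ^ k" using n by simp
    then show ?thesis using m0 by simp
  qed
  have "(\<Sum>k. if n * 2 ^ k < x then ennreal (b ^ k) else 0) = (\<Sum>k<m0. if n * 2 ^ k < x then ennreal (b ^ k) else 0)"
    by (rule suminf_finite) (use ge in auto)
  also have "\<dots> = (\<Sum>k<m0. ennreal (b ^ k))" using lt by (intro sum.cong) auto
  also have "\<dots> = ennreal (\<Sum>k<m0. b ^ k)" using b1 by simp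
  also have "(\<Sum>k<m0. b ^ k) = (b ^ m0 - 1) / (b - 1)"
    using b1 by (simp add: geometric_sum)
  also have "\<dots> \<le> b / (b - 1) * (x / n) powr (P - 1)"
  proof (cases m0)
    case 0
    then show ?thesis using b1 by simp
  next
    case (Suc j)
    have "n * 2 ^ j < x" using lt[of j] Suc by simp
    then have "2 ^ j < x / n" using n by (simp add: field_simps)
    then have "((2::real) ^ j) powr (P - 1) \<le> (x / n) powr (P - 1)"
      using P by (intro powr_mono2) auto
    then have bj: "b ^ j \<le> (x / n) powr (P - 1)" unfolding b_def pow2_powr .
    have "(b ^ m0 - 1) / (b - 1) \<le> b ^ m0 / (b - 1)"
      using b1 by (intro divide_right_mono) auto
    also have "\<dots> = b * b ^ j / (b - 1)" using Suc by simp
    also have "\<dots> \<le> b * (x / n) powr (P - 1) / (b - 1)"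
      using b1 bj by (intro divide_right_mono mult_left_mono) auto
    finally show ?thesis by simp
  qed
  finally show ?thesis unfolding b_def by (simp add: ennreal_leI)
qed


lemma term_bound:
  fixes n P d Q g a :: real and k :: nat
  assumes n: "0 < n" and P: "1 < P" and d: "1 < d" and Q: "Q \<le> P * d"
    and g0: "0 \<le> g" and g: "g \<le> (n * 2 ^ k) powr (1 - P) * n powr P"
    and a: "a = g / (2 * (n * 2 ^ k))"
  shows "(8 * n * 2 ^ k) powr Q * (a powr d / d) \<le> 8 powr Q * n powr (Q - 1) * (2 powr (P - 1)) ^ k * g"
proof -
  define u :: real where "u = 2 ^ k"
  have u1: "1 \<le> u" unfolding u_def by simp
  have u0: "0 < u" using u1 by simp
  have a0: "0 \<le> a" using a g0 n by simp
  have a1: "a \<le> g / (n * u)" unfolding a u_def using g0 n by (simp add: frac_le)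
  have "g / (n * u) \<le> (n * u) powr (1 - P) * n powr P / (n * u)"
    using g n u0 unfolding u_def by (simp add: divide_right_mono)
  also have "(n * u) powr (1 - P) * n powr P / (n * u) = u powr (- P)"
  proof -
    have "(n * u) powr (1 - P) / (n * u) = (n * u) powr (- P)"
    proof -
      have "(n * u) powr (1 - P) = (n * u) powr (1 + (- P))" by simp
      also have "\<dots> = (n * u) * (n * u) powr (- P)"
        using n u0 by (simp only: powr_add powr_one less_imp_le mult_pos_pos)
      finally show ?thesis using n u0 by simp
    qed
    also have "\<dots> = n powr (- P) * u powr (- P)" by (simp add: powr_mult)
    finally have "(n * u) powr (1 - P) * n powr P / (n * u) = n powr (- P) * n powr P * u powr (- P)"
      by (metis (no_types, lifting) mult.commute mult.left_commute times_divide_eq_left)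
    also have "n powr (- P) * n powr P = 1" using n by (simp add: powr_add[symmetric])
    finally show ?thesis by simp
  qed
  finally have a2: "a \<le> u powr (- P)" using a1 by simp
  have "a powr d = a powr ((d - 1) + 1)" by simp
  also have "\<dots> = a powr (d - 1) * a" using a0 by (simp only: powr_add powr_one)
  also have "\<dots> \<le> (u powr (- P)) powr (d - 1) * (g / (n * u))"
    using a0 a1 a2 d by (intro mult_mono powr_mono2) auto
  also have "(u powr (- P)) powr (d - 1) = u powr (- P * (d - 1))" by (simp add: powr_powr)
  finally have ad: "a powr d \<le> u powr (- P * (d - 1)) * (g / (n * u))" .
  have "(8 * n * 2 ^ k) powr Q * (a powr d / d) \<le> (8 * n * u) powr Q * a powr d"
    using d unfolding u_def by (intro mult_left_mono) (auto simp: divide_le_eq mult_le_cancel_left1 less_imp_le)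
  also have "\<dots> \<le> (8 * n * u) powr Q * (u powr (- P * (d - 1)) * (g / (n * u)))"
    by (intro mult_left_mono ad) simp
  also have "\<dots> = 8 powr Q * (n powr Q / n) * (u powr Q * u powr (- P * (d - 1)) / u) * g"
    using n u0 by (simp add: powr_mult field_simps)
  also have "n powr Q / n = n powr (Q - 1)" using n by (simp add: powr_diff)
  also have "u powr Q * u powr (- P * (d - 1)) / u = u powr (Q - P * (d - 1) - 1)"
    using u0 by (simp add: powr_diff powr_add[symmetric])
  also have "u powr (Q - P * (d - 1) - 1) \<le> u powr (P - 1)"
    using u1 Q by (intro powr_mono) (auto simp: algebra_simps)
  also have "u powr (P - 1) = (2 powr (P - 1)) ^ k" unfolding u_def by (simp add: pow2_powr)
  finally show ?thesis using g0 n by (simp add: mult_left_mono mult_right_mono mult_ac)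
qed

lemma enn_term_le_suminf: "(f::nat \<Rightarrow> ennreal) j \<le> suminf f"
  using sum_le_suminf[OF summableI, of "{j}" f] by simp

lemma layer_pointwise:
  fixes f :: "real \<Rightarrow> real" and n P Q d r :: real
  assumes [measurable]: "f \<in> borel_measurable borel" and n: "0 < n" and P: "1 < P" and Q: "0 < Q"
    and r: "0 < r" "r < 4/3"
    and Gfin: "\<And>k. Gf f (n * 2 ^ k) = ennreal (gk k)" "\<And>k. 0 \<le> gk k"
  shows "enn_powr (R2 f r) Q \<le> ennreal ((4 * n) powr Q) +
      (\<Sum>k. ennreal ((8 * n * 2 ^ k) powr Q) * indicator {0<..<gk k / (2 * (n * 2 ^ k))} r)"
proof -
  have bnd: "R2 f r \<le> ennreal (2 * (n * 2 ^ k) + gk k / r)" for k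
  proof -
    have "R2 f r \<le> ennreal (2 * (n * 2 ^ k)) + ennreal (1 / r) * Gf f (n * 2 ^ k)"
      using R2_bound[OF assms(1) r, of "n * 2 ^ k"] n by (simp add: Gf_def)
    also have "\<dots> = ennreal (2 * (n * 2 ^ k) + gk k / r)"
      using Gfin[of k] r n by (simp add: ennreal_mult'[symmetric] ennreal_plus[symmetric] del: ennreal_plus)
    finally show ?thesis .
  qed
  obtain h where h: "R2 f r = ennreal h" "0 \<le> h"
    using bnd[of 0] by (cases "R2 f r") (auto simp: top_unique)
  have lhs: "enn_powr (R2 f r) Q = ennreal (h powr Q)" using h by (simp add: enn_powr_ennreal)
  show ?thesis
  proof (cases "h \<le> 4 * n")
    case True
    have "ennreal (h powr Q) \<le> ennreal ((4 * n) powr Q)"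
      using True h Q by (intro ennreal_leI powr_mono2) auto
    then show ?thesis unfolding lhs by (rule order_trans) (rule add_increasing2, auto)
  next
    case False
    obtain m where m: "h / (4 * n) < 2 ^ m" using real_arch_pow[of 2 "h / (4 * n)"] by auto
    have ex: "\<exists>k. h \<le> 4 * n * 2 ^ k" using m n by (intro exI[of _ m]) (simp add: field_simps)
    define k0 where "k0 = (LEAST k. h \<le> 4 * n * 2 ^ k)"
    have k0: "h \<le> 4 * n * 2 ^ k0" unfolding k0_def by (rule LeastI_ex[OF ex])
    have "k0 \<noteq> 0" using k0 False by (intro notI) simp
    then obtain j where j: "k0 = Suc j" by (cases k0) auto
    have hj: "4 * n * 2 ^ j < h"
      using not_less_Least[of j "\<lambda>k. h \<le> 4 * n * 2 ^ k"] j unfolding k0_def by simp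
    have hj2: "h \<le> 8 * n * 2 ^ j" using k0 j by simp
    have "ennreal h \<le> ennreal (2 * (n * 2 ^ j) + gk j / r)" using bnd[of j] h by simp
    then have "h \<le> 2 * (n * 2 ^ j) + gk j / r" using Gfin(2)[of j] r n
      by (subst (asm) ennreal_le_iff) auto
    with hj have "2 * (n * 2 ^ j) < gk j / r" by simp
    then have rj: "r < gk j / (2 * (n * 2 ^ j))" using r n by (simp add: field_simps)
    have "ennreal (h powr Q) \<le> ennreal ((8 * n * 2 ^ j) powr Q) * indicator {0<..<gk j / (2 * (n * 2 ^ j))} r"
      using rj r hj2 h Q by (auto intro!: ennreal_leI powr_mono2)
    also have "\<dots> \<le> (\<Sum>k. ennreal ((8 * n * 2 ^ k) powr Q) * indicator {0<..<gk k / (2 * (n * 2 ^ k))} r)"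
      by (rule enn_term_le_suminf[of "\<lambda>k. ennreal ((8 * n * 2 ^ k) powr Q) * indicator {0<..<gk k / (2 * (n * 2 ^ k))} r"])
    finally show ?thesis unfolding lhs by (rule order_trans) (rule add_increasing, auto)
  qed
qed


lemma geo_pointwise:
  fixes x n P :: real
  assumes n: "0 < n" and P: "1 < P" and x: "0 \<le> x"
  shows "(\<Sum>k. ennreal ((2 powr (P - 1)) ^ k) * (ennreal x * indicator {y. n * 2 ^ k < y} x * c))
    \<le> ennreal (2 powr (P - 1) / (2 powr (P - 1) - 1) * n powr (1 - P)) * (ennreal (x powr P) * c)"
proof -
  define cP where "cP = 2 powr (P - 1) / (2 powr (P - 1) - 1)"
  have cP0: "0 \<le> cP" unfolding cP_def using P by (simp add: less_imp_le)
  have "(\<Sum>k. ennreal ((2 powr (P - 1)) ^ k) * (ennreal x * indicator {y. n * 2 ^ k < y} x * c))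
     = (ennreal x * c) * (\<Sum>k. if n * 2 ^ k < x then ennreal ((2 powr (P - 1)) ^ k) else 0)"
    by (subst ennreal_suminf_cmult[symmetric]) (rule suminf_cong, auto simp: indicator_def mult_ac)
  also have "\<dots> \<le> (ennreal x * c) * ennreal (cP * (x / n) powr (P - 1))"
    unfolding cP_def by (intro mult_left_mono geo_bound n P x) simp
  also have "ennreal x * ennreal (cP * (x / n) powr (P - 1)) = ennreal (cP * n powr (1 - P)) * ennreal (x powr P)"
  proof -
    have "x * (cP * (x / n) powr (P - 1)) = cP * (x * x powr (P - 1)) / n powr (P - 1)"
      by (simp add: powr_divide)
    also have "x * x powr (P - 1) = x powr P"
    proof -
      have "x powr P = x powr (1 + (P - 1))" by simp
      also have "\<dots> = x * x powr (P - 1)" using x by (simp only: powr_add powr_one)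
      finally show ?thesis by simp
    qed
    also have "cP * x powr P / n powr (P - 1) = cP * n powr (1 - P) * x powr P"
      using n by (simp add: powr_diff powr_minus_divide field_simps)
    finally show ?thesis using x cP0 n by (simp add: ennreal_mult'[symmetric] mult_ac)
  qed
  then have "(ennreal x * c) * ennreal (cP * (x / n) powr (P - 1)) = ennreal (cP * n powr (1 - P)) * (ennreal (x powr P) * c)"
    by (simp add: mult_ac)
  finally show ?thesis unfolding cP_def .
qed


lemma strong_core:
  fixes f :: "real \<Rightarrow> real" and n P Q d :: real
  assumes [measurable]: "f \<in> borel_measurable borel" and d: "1 < d" and P: "1 < P" and PQ: "P \<le> Q"
    and Q: "Q \<le> P * d" and n: "0 < n"
    and JP: "(\<integral>\<^sup>+ s. ennreal (\<bar>f s\<bar> powr P) * indicator {1/3..10/3} s \<partial>lborel) \<le> ennreal (n powr P)"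
  shows "(\<integral>\<^sup>+ r. enn_powr (R2 f r) Q \<partial>mu d) \<le>
    ennreal ((4 powr Q * ((4/3) powr d / d) + 8 powr Q * (2 powr (P - 1) / (2 powr (P - 1) - 1))) * n powr Q)"
proof -
  define b where "b = (2::real) powr (P - 1)"
  define cP where "cP = b / (b - 1)"
  have b1: "1 < b" unfolding b_def using P by simp
  have cP0: "0 \<le> cP" unfolding cP_def using b1 by simp
  define gk where "gk k = enn2real (Gf f (n * 2 ^ k))" for k
  have Gle: "Gf f (n * 2 ^ k) \<le> ennreal ((n * 2 ^ k) powr (1 - P) * n powr P)" for k
  proof -
    have "Gf f (n * 2 ^ k) \<le> ennreal ((n * 2 ^ k) powr (1 - P)) * (\<integral>\<^sup>+ s. ennreal (\<bar>f s\<bar> powr P) * indicator {1/3..10/3} s \<partial>lborel)"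
      by (rule Gf_cheb) (use n P in auto)
    also have "\<dots> \<le> ennreal ((n * 2 ^ k) powr (1 - P)) * ennreal (n powr P)"
      by (intro mult_left_mono JP) simp
    finally show ?thesis by (simp add: ennreal_mult'[symmetric])
  qed
  have Gfin: "Gf f (n * 2 ^ k) = ennreal (gk k)" and gk0: "0 \<le> gk k" for k
    using Gle[of k] unfolding gk_def by (cases "Gf f (n * 2 ^ k)"; auto simp: top_unique)+
  have gkle: "gk k \<le> (n * 2 ^ k) powr (1 - P) * n powr P" for k
  proof -
    have "ennreal (gk k) \<le> ennreal ((n * 2 ^ k) powr (1 - P) * n powr P)"
      using Gle[of k] unfolding Gfin[of k] .
    then show ?thesis by (subst (asm) ennreal_le_iff) auto
  qed
  define ak where "ak k = gk k / (2 * (n * 2 ^ k))" for k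
  have ak0: "0 \<le> ak k" for k unfolding ak_def using gk0[of k] n by simp
  have step1: "(\<integral>\<^sup>+ r. enn_powr (R2 f r) Q \<partial>mu d) \<le>
     (\<integral>\<^sup>+ r. ennreal ((4 * n) powr Q) * indicator {0<..<4/3} r +
        (\<Sum>k. ennreal ((8 * n * 2 ^ k) powr Q) * indicator {0<..<ak k} r) \<partial>mu d)"
  proof (intro nn_integral_mono)
    fix r assume "r \<in> space (mu d)"
    then have r0: "0 < r" by simp
    show "enn_powr (R2 f r) Q \<le> ennreal ((4 * n) powr Q) * indicator {0<..<4/3} r +
        (\<Sum>k. ennreal ((8 * n * 2 ^ k) powr Q) * indicator {0<..<ak k} r)"
    proof (cases "r < 4/3")
      case True
      show ?thesis
        using layer_pointwise[OF assms(1) n P _ r0 True, of Q gk] Gfin gk0 True r0 PQ P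
        unfolding ak_def by simp
    next
      case False
      then have "R2 f r = 0" by (intro R2_out) simp
      then show ?thesis unfolding enn_powr_def by simp
    qed
  qed
  have ms: "(\<lambda>r. ennreal c * indicator A r) \<in> borel_measurable (mu d)" if "A \<in> sets borel" for c and A :: "real set"
    by (rule measurable_mu) (use that in simp)
  have step2: "(\<integral>\<^sup>+ r. ennreal ((4 * n) powr Q) * indicator {0<..<4/3} r +
        (\<Sum>k. ennreal ((8 * n * 2 ^ k) powr Q) * indicator {0<..<ak k} r) \<partial>mu d)
     = ennreal ((4 * n) powr Q) * (\<integral>\<^sup>+ r. indicator {0<..<4/3} r \<partial>mu d) +
        (\<Sum>k. ennreal ((8 * n * 2 ^ k) powr Q) * (\<integral>\<^sup>+ r. indicator {0<..<ak k} r \<partial>mu d))"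
    apply (subst nn_integral_add)
      apply (rule measurable_mu, measurable)
     apply (rule measurable_mu, measurable)
    apply (subst nn_integral_suminf)
     apply (rule measurable_mu, measurable)
    apply (subst nn_integral_cmult, rule measurable_mu, measurable)
    apply (rule arg_cong[where f="\<lambda>x. _ + x"], rule suminf_cong, rule nn_integral_cmult, rule measurable_mu, measurable)
    done
  have step3: "ennreal ((4 * n) powr Q) * (\<integral>\<^sup>+ r. indicator {0<..<4/3} r \<partial>mu d) +
        (\<Sum>k. ennreal ((8 * n * 2 ^ k) powr Q) * (\<integral>\<^sup>+ r. indicator {0<..<ak k} r \<partial>mu d))
     \<le> ennreal ((4 * n) powr Q * ((4/3) powr d / d)) +
        (\<Sum>k. ennreal ((8 * n * 2 ^ k) powr Q * (ak k powr d / d)))"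
  proof (intro add_mono suminf_le summableI)
    show "ennreal ((4 * n) powr Q) * (\<integral>\<^sup>+ r. indicator {0<..<4/3} r \<partial>mu d) \<le> ennreal ((4 * n) powr Q * ((4/3) powr d / d))"
    proof -
      have "ennreal ((4 * n) powr Q) * (\<integral>\<^sup>+ r. indicator {0<..<4/3} r \<partial>mu d) \<le> ennreal ((4 * n) powr Q) * ennreal ((4/3) powr d / d)"
        by (rule mult_left_mono[OF mu_Ioo_int]) (use d in auto)
      also have "\<dots> = ennreal ((4 * n) powr Q * ((4/3) powr d / d))"
        by (rule ennreal_mult[symmetric]) (use d in auto)
      finally show ?thesis .
    qed
    fix k
    show "ennreal ((8 * n * 2 ^ k) powr Q) * (\<integral>\<^sup>+ r. indicator {0<..<ak k} r \<partial>mu d) \<le> ennreal ((8 * n * 2 ^ k) powr Q * (ak k powr d / d))"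
    proof -
      have "ennreal ((8 * n * 2 ^ k) powr Q) * (\<integral>\<^sup>+ r. indicator {0<..<ak k} r \<partial>mu d) \<le> ennreal ((8 * n * 2 ^ k) powr Q) * ennreal (ak k powr d / d)"
        by (rule mult_left_mono[OF mu_Ioo_int]) (use d ak0 in auto)
      also have "\<dots> = ennreal ((8 * n * 2 ^ k) powr Q * (ak k powr d / d))"
        by (rule ennreal_mult[symmetric]) (use d in auto)
      finally show ?thesis .
    qed
  qed
  have step4: "(\<Sum>k. ennreal ((8 * n * 2 ^ k) powr Q * (ak k powr d / d)))
     \<le> ennreal (8 powr Q * n powr (Q - 1)) * (\<Sum>k. ennreal (b ^ k) * Gf f (n * 2 ^ k))"
  proof -
    have "(\<Sum>k. ennreal ((8 * n * 2 ^ k) powr Q * (ak k powr d / d)))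
       \<le> (\<Sum>k. ennreal (8 powr Q * n powr (Q - 1)) * (ennreal (b ^ k) * Gf f (n * 2 ^ k)))"
    proof (intro suminf_le summableI)
      fix k
      have "(8 * n * 2 ^ k) powr Q * (ak k powr d / d) \<le> 8 powr Q * n powr (Q - 1) * (2 powr (P - 1)) ^ k * gk k"
        by (rule term_bound[OF n P d Q gk0 gkle]) (simp add: ak_def)
      then show "ennreal ((8 * n * 2 ^ k) powr Q * (ak k powr d / d)) \<le> ennreal (8 powr Q * n powr (Q - 1)) * (ennreal (b ^ k) * Gf f (n * 2 ^ k))"
        unfolding Gfin b_def using gk0[of k] b1 by (simp add: ennreal_mult'[symmetric] ennreal_leI mult_ac)
    qed
    then show ?thesis by simp
  qed
  have step5: "(\<Sum>k. ennreal (b ^ k) * Gf f (n * 2 ^ k)) \<le> ennreal (cP * n)"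
  proof -
    have "(\<Sum>k. ennreal (b ^ k) * Gf f (n * 2 ^ k)) =
        (\<integral>\<^sup>+ s. (\<Sum>k. ennreal (b ^ k) * (ennreal \<bar>f s\<bar> * indicator {y. n * 2 ^ k < y} \<bar>f s\<bar> * indicator {1/3..10/3} s)) \<partial>lborel)"
    proof -
      have "(\<Sum>k. ennreal (b ^ k) * Gf f (n * 2 ^ k)) =
        (\<Sum>k. (\<integral>\<^sup>+ s. ennreal (b ^ k) * (ennreal \<bar>f s\<bar> * indicator {y. n * 2 ^ k < y} \<bar>f s\<bar> * indicator {1/3..10/3} s) \<partial>lborel))"
        unfolding Gf_def by (subst nn_integral_cmult) (auto simp: indicator_def)
      also have "\<dots> = (\<integral>\<^sup>+ s. (\<Sum>k. ennreal (b ^ k) * (ennreal \<bar>f s\<bar> * indicator {y. n * 2 ^ k < y} \<bar>f s\<bar> * indicator {1/3..10/3} s)) \<partial>lborel)"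
        by (rule nn_integral_suminf[symmetric]) measurable
      finally show ?thesis .
    qed
    also have "\<dots> \<le> (\<integral>\<^sup>+ s. ennreal (cP * n powr (1 - P)) * (ennreal (\<bar>f s\<bar> powr P) * indicator {1/3..10/3} s) \<partial>lborel)"
      unfolding cP_def b_def by (intro nn_integral_mono geo_pointwise n P) simp
    also have "\<dots> = ennreal (cP * n powr (1 - P)) * (\<integral>\<^sup>+ s. ennreal (\<bar>f s\<bar> powr P) * indicator {1/3..10/3} s \<partial>lborel)"
      by (rule nn_integral_cmult) simp
    also have "\<dots> \<le> ennreal (cP * n powr (1 - P)) * ennreal (n powr P)"
      by (intro mult_left_mono JP) simp
    also have "\<dots> = ennreal (cP * n)"
    proof -
      have "n powr (1 - P) * n powr P = n" using n by (simp add: powr_add[symmetric])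
      then show ?thesis using cP0 n by (simp add: ennreal_mult'[symmetric] mult.assoc)
    qed
    finally show ?thesis .
  qed
  have "(\<integral>\<^sup>+ r. enn_powr (R2 f r) Q \<partial>mu d) \<le> ennreal ((4 * n) powr Q * ((4/3) powr d / d)) +
        ennreal (8 powr Q * n powr (Q - 1)) * ennreal (cP * n)"
  proof -
    have "(\<integral>\<^sup>+ r. enn_powr (R2 f r) Q \<partial>mu d) \<le> ennreal ((4 * n) powr Q * ((4/3) powr d / d)) +
        (\<Sum>k. ennreal ((8 * n * 2 ^ k) powr Q * (ak k powr d / d)))"
      using order.trans[OF step1[unfolded step2] step3] .
    also have "\<dots> \<le> ennreal ((4 * n) powr Q * ((4/3) powr d / d)) +
        ennreal (8 powr Q * n powr (Q - 1)) * ennreal (cP * n)"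
      by (intro add_left_mono order.trans[OF step4] mult_left_mono step5) simp
    finally show ?thesis .
  qed
  also have "\<dots> = ennreal ((4 powr Q * ((4/3) powr d / d) + 8 powr Q * cP) * n powr Q)"
  proof -
    have e1: "(4 * n) powr Q * ((4/3) powr d / d) = 4 powr Q * ((4/3) powr d / d) * n powr Q"
      by (simp add: powr_mult)
    have e2: "8 powr Q * n powr (Q - 1) * (cP * n) = 8 powr Q * cP * n powr Q"
      using n by (simp add: powr_diff)
    show ?thesis
      using n d cP0 by (simp add: e1 e2[symmetric] powr_mult ennreal_mult'[symmetric] ennreal_plus[symmetric] distrib_right del: ennreal_plus)
  qed
  finally show ?thesis unfolding cP_def b_def .
qed

lemma AE_mu_lborel:
  assumes "AE x in mu d. P x"
  shows "AE x in lborel. 0 < x \<longrightarrow> P x"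
proof -
  have m: "(\<lambda>x. ennreal (x powr (d - 1))) \<in> borel_measurable (restrict_space lborel {0<..})"
    by (rule measurable_restrict_space1) simp
  have "AE x in restrict_space lborel {0<..}. 0 < ennreal (x powr (d - 1)) \<longrightarrow> P x"
    using assms unfolding mu_def by (subst (asm) AE_density[OF m])
  then have "AE x in lborel. x \<in> {0<..} \<longrightarrow> (0 < ennreal (x powr (d - 1)) \<longrightarrow> P x)"
    by (subst (asm) AE_restrict_space_iff) auto
  then show ?thesis by eventually_elim auto
qed

lemma R2_Linf_pointwise:
  assumes [measurable]: "f \<in> borel_measurable borel" and C: "AE x in mu d. ennreal \<bar>f x\<bar> \<le> C"
  shows "R2 f r \<le> 2 * C"
proof (cases "C = top")
  case True then show ?thesis by (simp add: ennreal_mult_top)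
next
  case False
  then obtain c where c: "C = ennreal c" "0 \<le> c" by (cases C) auto
  have AEl: "AE s in lborel. 0 < s \<longrightarrow> \<bar>f s\<bar> \<le> c"
    using AE_mu_lborel[OF C] c by (auto elim!: AE_mp intro!: AE_I2 simp: ennreal_le_iff)
  show ?thesis
  proof (cases "0 < r \<and> r < 4/3")
    case False then show ?thesis by (subst R2_out) auto
  next
    case True
    then have r: "0 < r" "r < 4/3" by auto
    have "(SUP t\<in>{t. 1 \<le> t \<and> t \<le> 2 \<and> 3 * r / 2 \<le> t}.
        ennreal (1 / r) * (\<integral>\<^sup>+ s\<in>{t - r..t + r}. ennreal \<bar>f s\<bar> \<partial>lborel)) \<le> ennreal (2 * c)"
    proof (rule SUP_least)
      fix t assume t: "t \<in> {t. 1 \<le> t \<and> t \<le> 2 \<and> 3 * r / 2 \<le> t}"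
      have "(\<integral>\<^sup>+ s\<in>{t - r..t + r}. ennreal \<bar>f s\<bar> \<partial>lborel) \<le> (\<integral>\<^sup>+ s. ennreal c * indicator {t - r..t + r} s \<partial>lborel)"
      proof (rule nn_integral_mono_AE)
        show "AE s in lborel. ennreal \<bar>f s\<bar> * indicator {t - r..t + r} s \<le> ennreal c * indicator {t - r..t + r} s"
          using AEl
        proof eventually_elim
          case (elim s)
          show ?case
          proof (cases "s \<in> {t - r..t + r}")
            case True
            then have "0 < s" using t r by auto
            then show ?thesis using elim True by (simp add: ennreal_leI)
          qed simp
        qed
      qed
      also have "\<dots> = ennreal (c * (2 * r))"
        using r c by (simp add: nn_integral_cmult_indicator ennreal_mult)
      finally have "ennreal (1 / r) * (\<integral>\<^sup>+ s\<in>{t - r..t + r}. ennreal \<bar>f s\<bar> \<partial>lborel) \<le> ennreal (1 / r) * ennreal (c * (2 * r))"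
        by (rule mult_left_mono) simp
      also have "\<dots> = ennreal (2 * c)" using r c by (simp add: ennreal_mult'[symmetric])
      finally show "ennreal (1 / r) * (\<integral>\<^sup>+ s\<in>{t - r..t + r}. ennreal \<bar>f s\<bar> \<partial>lborel) \<le> ennreal (2 * c)" .
    qed
    then show ?thesis unfolding R2_def using r c by (simp add: ennreal_mult)
  qed
qed

lemma Linf:
  assumes [measurable]: "f \<in> borel_measurable borel"
  shows "Lp_norm (mu d) top (R2 f) \<le> 2 * Lp_norm (mu d) top (\<lambda>x. ennreal \<bar>f x\<bar>)"
proof -
  define X where "X = {C. AE x in mu d. ennreal \<bar>f x\<bar> \<le> C}"
  define Y where "Y = {C. AE x in mu d. R2 f x \<le> C}"
  have YX: "Inf Y \<le> 2 * C" if "C \<in> X" for C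
  proof (rule Inf_lower)
    show "2 * C \<in> Y" unfolding Y_def
      using R2_Linf_pointwise[OF assms] that unfolding X_def by simp
  qed
  have "Inf Y \<le> 2 * Inf X"
  proof (rule ennreal_le_epsilon)
    fix e :: real assume fin: "2 * Inf X < top" and e: "0 < e"
    have fin': "Inf X < top" using fin by (auto simp: ennreal_mult_less_top)
    have "Inf X < Inf X + ennreal (e / 2)"
    proof -
      obtain x where x: "Inf X = ennreal x" "0 \<le> x" using fin' by (cases "Inf X") auto
      then show ?thesis using e by (simp add: ennreal_plus[symmetric] ennreal_less_iff del: ennreal_plus)
    qed
    then obtain C where C: "C \<in> X" "C < Inf X + ennreal (e / 2)" by (auto simp: Inf_less_iff)
    have "Inf Y \<le> 2 * C" by (rule YX[OF C(1)])
    also have "\<dots> \<le> 2 * (Inf X + ennreal (e / 2))" using C(2) by (intro mult_left_mono) auto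
    also have "\<dots> = 2 * Inf X + ennreal e"
    proof -
      have "2 * ennreal (e/2) = ennreal e" using ennreal_mult[of 2 "e/2"] e by simp
      then show ?thesis by (simp add: distrib_left)
    qed
    finally show "Inf Y \<le> 2 * Inf X + ennreal e" .
  qed
  then show ?thesis unfolding Lp_norm_def X_def Y_def by simp
qed


lemma strong_final:
  fixes f :: "real \<Rightarrow> real" and P Q d :: real
  assumes [measurable]: "f \<in> borel_measurable borel" and d: "1 < d" and P: "1 < P" and PQ: "P \<le> Q"
    and Q: "Q \<le> P * d"
    and fin: "(\<integral>\<^sup>+ x. ennreal (\<bar>f x\<bar> powr P) \<partial>mu d) < top"
  shows "enn_powr (\<integral>\<^sup>+ r. enn_powr (R2 f r) Q \<partial>mu d) (1 / Q) \<le>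
    ennreal ((4 powr Q * ((4/3) powr d / d) + 8 powr Q * (2 powr (P - 1) / (2 powr (P - 1) - 1))) powr (1 / Q) * 3 powr ((d - 1) / P))
    * enn_powr (\<integral>\<^sup>+ x. ennreal (\<bar>f x\<bar> powr P) \<partial>mu d) (1 / P)"
proof -
  define K where "K = 4 powr Q * ((4/3) powr d / d) + 8 powr Q * (2 powr (P - 1) / (2 powr (P - 1) - 1))"
  have K0: "0 < K" unfolding K_def using P d
    by (intro add_pos_pos mult_pos_pos divide_pos_pos) auto
  obtain ip where ip: "(\<integral>\<^sup>+ x. ennreal (\<bar>f x\<bar> powr P) \<partial>mu d) = ennreal ip" "0 \<le> ip"
    using fin by (cases "(\<integral>\<^sup>+ x. ennreal (\<bar>f x\<bar> powr P) \<partial>mu d)") auto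
  have JP: "(\<integral>\<^sup>+ s. ennreal (\<bar>f s\<bar> powr P) * indicator {1/3..10/3} s \<partial>lborel) \<le> ennreal (3 powr (d - 1) * ip)"
    using J_bound[of "\<lambda>s. ennreal (\<bar>f s\<bar> powr P)" d] d ip by (simp add: ennreal_mult)
  have Q0: "0 < Q" using P PQ by simp
  show ?thesis
  proof (cases "ip = 0")
    case True
    have "(\<integral>\<^sup>+ r. enn_powr (R2 f r) Q \<partial>mu d) \<le> 0"
    proof (rule ennreal_le_epsilon)
      fix e :: real assume e: "0 < e"
      define n where "n = (e / K) powr (1 / Q)"
      have n: "0 < n" unfolding n_def using e K0 by simp
      have "(\<integral>\<^sup>+ r. enn_powr (R2 f r) Q \<partial>mu d) \<le> ennreal (K * n powr Q)"
        unfolding K_def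
        by (rule strong_core[OF assms(1) d P PQ Q n]) (use JP True in simp)
      also have "K * n powr Q = e" unfolding n_def using e K0 Q0 by (simp add: powr_powr)
      finally show "(\<integral>\<^sup>+ r. enn_powr (R2 f r) Q \<partial>mu d) \<le> 0 + ennreal e" by simp
    qed
    then have "(\<integral>\<^sup>+ r. enn_powr (R2 f r) Q \<partial>mu d) = 0" by simp
    then show ?thesis by (simp add: enn_powr_def)
  next
    case False
    define n where "n = (3 powr (d - 1) * ip) powr (1 / P)"
    have n: "0 < n" unfolding n_def using False ip by simp
    have nP: "n powr P = 3 powr (d - 1) * ip" unfolding n_def using P ip by (simp add: powr_powr)
    have "(\<integral>\<^sup>+ r. enn_powr (R2 f r) Q \<partial>mu d) \<le> ennreal (K * n powr Q)"
      unfolding K_def by (rule strong_core[OF assms(1) d P PQ Q n]) (use JP nP in simp)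
    then have "enn_powr (\<integral>\<^sup>+ r. enn_powr (R2 f r) Q \<partial>mu d) (1 / Q) \<le> enn_powr (ennreal (K * n powr Q)) (1 / Q)"
      by (rule enn_powr_mono) (use Q0 in simp)
    also have "\<dots> = ennreal ((K * n powr Q) powr (1 / Q))"
      by (rule enn_powr_ennreal) (use K0 in simp)
    also have "(K * n powr Q) powr (1 / Q) = K powr (1 / Q) * n"
      using Q0 n by (simp add: powr_mult powr_powr)
    also have "n = 3 powr ((d - 1) / P) * ip powr (1 / P)"
      unfolding n_def using ip by (simp add: powr_mult powr_powr)
    finally show ?thesis
      using ip K0 unfolding K_def[symmetric]
      by (simp add: enn_powr_ennreal ennreal_mult'[symmetric] mult_ac)
  qed
qed


theorem lemma2p3:
  fixes d :: real and p q :: ennreal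
  assumes "d > 1" and "1 < p" and "p \<le> q" and "q \<le> p * ennreal d"
  shows "(\<exists>C < \<infinity>. \<forall>f :: real \<Rightarrow> real. f \<in> borel_measurable borel \<longrightarrow>
            Lp_norm (mu d) p (\<lambda>x. ennreal \<bar>f x\<bar>) < \<infinity> \<longrightarrow>
            Lp_norm (mu d) q (R2 f) \<le> C * Lp_norm (mu d) p (\<lambda>x. ennreal \<bar>f x\<bar>))
       \<and> (\<exists>C < \<infinity>. \<forall>f :: real \<Rightarrow> real. f \<in> borel_measurable borel \<longrightarrow>
            Lp_norm (mu d) 1 (\<lambda>x. ennreal \<bar>f x\<bar>) < \<infinity> \<longrightarrow>
            Lp_norm (mu d) 1 (R2 f) \<le> C * Lp_norm (mu d) 1 (\<lambda>x. ennreal \<bar>f x\<bar>))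
       \<and> (\<exists>C < \<infinity>. \<forall>f :: real \<Rightarrow> real. f \<in> borel_measurable borel \<longrightarrow>
            Lp_norm (mu d) 1 (\<lambda>x. ennreal \<bar>f x\<bar>) < \<infinity> \<longrightarrow>
            (\<forall>lam::real. lam > 0 \<longrightarrow>
               ennreal lam * enn_powr (emeasure (mu d) {r \<in> space (mu d). R2 f r > ennreal lam}) (1 / d)
                 \<le> C * Lp_norm (mu d) 1 (\<lambda>x. ennreal \<bar>f x\<bar>)))"
proof (intro conjI)
  have d: "1 < d" using assms(1) by simp
  show "\<exists>C < \<infinity>. \<forall>f :: real \<Rightarrow> real. f \<in> borel_measurable borel \<longrightarrow>
            Lp_norm (mu d) p (\<lambda>x. ennreal \<bar>f x\<bar>) < \<infinity> \<longrightarrow>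
            Lp_norm (mu d) q (R2 f) \<le> C * Lp_norm (mu d) p (\<lambda>x. ennreal \<bar>f x\<bar>)"
  proof (cases "p = top")
    case True
    then have q: "q = top" using assms(3) by (simp add: top_unique)
    show ?thesis
      by (rule exI[of _ 2]) (auto simp: True q intro: Linf)
  next
    case False
    define P where "P = enn2real p"
    have p: "p = ennreal P" "0 \<le> P" unfolding P_def using False by (cases p; simp)+
    have P1: "1 < P"
    proof -
      have "ennreal 1 < ennreal P" using assms(2) p(1) by simp
      then show ?thesis by (subst (asm) ennreal_less_iff) auto
    qed
    have qfin: "q \<le> ennreal (P * d)" using assms(4) p d by (simp add: ennreal_mult)
    then have "q \<noteq> top" by (auto simp: top_unique)
    define Q where "Q = enn2real q"
    have q: "q = ennreal Q" "0 \<le> Q" unfolding Q_def using \<open>q \<noteq> top\<close> by (cases q; simp)+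
    have PQ: "P \<le> Q" using assms(3) p q by simp
    have QPd: "Q \<le> P * d" using qfin unfolding q(1) by (subst (asm) ennreal_le_iff) (use p d in auto)
    have Q0: "0 < Q" using PQ P1 by simp
    define Kc where "Kc = (4 powr Q * ((4/3) powr d / d) + 8 powr Q * (2 powr (P - 1) / (2 powr (P - 1) - 1))) powr (1 / Q) * 3 powr ((d - 1) / P)"
    show ?thesis
    proof (rule exI[of _ "ennreal Kc"], intro conjI allI impI)
      show "ennreal Kc < \<infinity>" by simp
      fix f :: "real \<Rightarrow> real"
      assume f: "f \<in> borel_measurable borel" and fin: "Lp_norm (mu d) p (\<lambda>x. ennreal \<bar>f x\<bar>) < \<infinity>"
      have Lp: "Lp_norm (mu d) p (\<lambda>x. ennreal \<bar>f x\<bar>) = enn_powr (\<integral>\<^sup>+ x. ennreal (\<bar>f x\<bar> powr P) \<partial>mu d) (1 / P)"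
        using Lp_norm_fin[OF False, of "mu d" f] unfolding P_def .
      have Lq: "Lp_norm (mu d) q (R2 f) = enn_powr (\<integral>\<^sup>+ r. enn_powr (R2 f r) Q \<partial>mu d) (1 / Q)"
        unfolding Lp_norm_def Q_def using \<open>q \<noteq> top\<close> by simp
      have fin': "(\<integral>\<^sup>+ x. ennreal (\<bar>f x\<bar> powr P) \<partial>mu d) < top"
        by (rule enn_powr_less_top) (use fin[unfolded Lp] in simp)
      show "Lp_norm (mu d) q (R2 f) \<le> ennreal Kc * Lp_norm (mu d) p (\<lambda>x. ennreal \<bar>f x\<bar>)"
        unfolding Lp Lq Kc_def by (rule strong_final[OF f d P1 PQ QPd fin'])
    qed
  qed
  show "\<exists>C < \<infinity>. \<forall>f :: real \<Rightarrow> real. f \<in> borel_measurable borel \<longrightarrow>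
            Lp_norm (mu d) 1 (\<lambda>x. ennreal \<bar>f x\<bar>) < \<infinity> \<longrightarrow>
            Lp_norm (mu d) 1 (R2 f) \<le> C * Lp_norm (mu d) 1 (\<lambda>x. ennreal \<bar>f x\<bar>)"
  proof (rule exI[of _ "ennreal (3 powr (d - 1) * ((4/3) powr (d - 1) / (d - 1)))"], intro conjI allI impI)
    fix f :: "real \<Rightarrow> real" assume f: "f \<in> borel_measurable borel"
    show "Lp_norm (mu d) 1 (R2 f) \<le> ennreal (3 powr (d - 1) * ((4/3) powr (d - 1) / (d - 1))) * Lp_norm (mu d) 1 (\<lambda>x. ennreal \<bar>f x\<bar>)"
      unfolding Lp_norm_1 by (rule L1_strong[OF f d])
  qed simp
  show "\<exists>C < \<infinity>. \<forall>f :: real \<Rightarrow> real. f \<in> borel_measurable borel \<longrightarrow>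
            Lp_norm (mu d) 1 (\<lambda>x. ennreal \<bar>f x\<bar>) < \<infinity> \<longrightarrow>
            (\<forall>lam::real. lam > 0 \<longrightarrow>
               ennreal lam * enn_powr (emeasure (mu d) {r \<in> space (mu d). R2 f r > ennreal lam}) (1 / d)
                 \<le> C * Lp_norm (mu d) 1 (\<lambda>x. ennreal \<bar>f x\<bar>))"
  proof (rule exI[of _ "ennreal (3 powr (d - 1))"], intro conjI allI impI)
    fix f :: "real \<Rightarrow> real" and lam :: real
    assume f: "f \<in> borel_measurable borel" and fin: "Lp_norm (mu d) 1 (\<lambda>x. ennreal \<bar>f x\<bar>) < \<infinity>"
      and lam: "0 < lam"
    have fin': "(\<integral>\<^sup>+ s. ennreal \<bar>f s\<bar> \<partial>mu d) < top" using fin unfolding Lp_norm_1 by simp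
    show "ennreal lam * enn_powr (emeasure (mu d) {r \<in> space (mu d). R2 f r > ennreal lam}) (1 / d)
                 \<le> ennreal (3 powr (d - 1)) * Lp_norm (mu d) 1 (\<lambda>x. ennreal \<bar>f x\<bar>)"
      unfolding Lp_norm_1 by (rule L1_weak[OF f d fin' lam])
  qed simp
qed

end
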